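(* Let $\mathcal M=(N,\mathcal I)$ be a loopless matroid and let $S\subseteq N$ be a random set containing each element of $N$ independently with probability $1/2$. Then with probability at least $1/100$, both $\rho_{\mathcal M|S}$ and $\rho_{\mathcal M|(N\setminus S)}$ are $(288,9)$-approximations of $\rho_{\mathcal M}$.
   Context: $\mathcal M|T$ denotes the restriction of $\mathcal M$ to $T\subseteq N$. For a matroid $\mathcal M=(N,\mathcal I)$ with rank function $r$, $D_{\mathcal M}(S,\lambda)$ is the unique inclusion-wise maximal maximizer of $|U|-\lambda r(U)$ over $U\subseteq S$, and the rank-density curve is $\rho_{\mathcal M}(t)=\max\{\lambda\ge0:r(D_{\mathcal M}(N,\lambda))\ge t\}$ for $0<t\le r(N)$, $\rho_{\mathcal M}(t)=0$ for $t>r(N)$. $(\alpha,\beta)$-downshift of a non-increasing $\rho:\mathbb R_{>0}\to\mathbb R_{\ge0}$: let $\phi(t)=\rho(\alpha)/\beta$ for $t\in(0,1]$ and $\phi(t)=\rho(\alpha t)/\beta$ for $t>1$; then $\rho'(t)=1$ if $\phi(t)\in(0,1)$ and $\rho'(t)=\phi(t)$ otherwise. A function $\tilde\rho:\mathbb R_{>0}\to\mathbb R_{\ge0}$ is an $(\alpha,\beta)$-approximation of $\rho$ if it is non-increasing and $\rho'\le\tilde\rho\le\rho$ pointwise. *)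

theory Defs
  imports Complex_Main
begin

definition matroid :: "'a set \<Rightarrow> 'a set set \<Rightarrow> bool" where
  "matroid N Ind \<longleftrightarrow> finite N \<and> (\<forall>I\<in>Ind. I \<subseteq> N) \<and> {} \<in> Ind
     \<and> (\<forall>I J. J \<in> Ind \<longrightarrow> I \<subseteq> J \<longrightarrow> I \<in> Ind)
     \<and> (\<forall>I J. I \<in> Ind \<longrightarrow> J \<in> Ind \<longrightarrow> card I < card J \<longrightarrow> (\<exists>e\<in>J - I. insert e I \<in> Ind))"

definition loopless :: "'a set \<Rightarrow> 'a set set \<Rightarrow> bool" where
  "loopless N Ind \<longleftrightarrow> (\<forall>e\<in>N. {e} \<in> Ind)"

definition restr_ind :: "'a set set \<Rightarrow> 'a set \<Rightarrow> 'a set set" where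
  "restr_ind Ind T = {I \<in> Ind. I \<subseteq> T}"

definition mrank :: "'a set set \<Rightarrow> 'a set \<Rightarrow> nat" where
  "mrank Ind U = Max {card I | I. I \<in> Ind \<and> I \<subseteq> U}"

text \<open>D(S,lambda): the unique inclusion-wise maximal maximizer of |U| - lambda r(U) over U \<subseteq> S.\<close>
definition is_dmax :: "'a set set \<Rightarrow> 'a set \<Rightarrow> real \<Rightarrow> 'a set \<Rightarrow> bool" where
  "is_dmax Ind S l U \<longleftrightarrow> U \<subseteq> S \<and>
     (\<forall>V. V \<subseteq> S \<longrightarrow> real (card V) - l * real (mrank Ind V) \<le> real (card U) - l * real (mrank Ind U))"

definition Dset :: "'a set set \<Rightarrow> 'a set \<Rightarrow> real \<Rightarrow> 'a set" where
  "Dset Ind S l = (THE U. is_dmax Ind S l U \<and> (\<forall>V. is_dmax Ind S l V \<longrightarrow> U \<subseteq> V \<longrightarrow> V = U))"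

text \<open>Rank-density curve of the matroid (N, Ind); only values at t > 0 are meaningful.\<close>
definition rank_density :: "'a set \<Rightarrow> 'a set set \<Rightarrow> real \<Rightarrow> real" where
  "rank_density N Ind t =
     (if 0 < t \<and> t \<le> real (mrank Ind N)
      then Sup {l. 0 \<le> l \<and> real (mrank Ind (Dset Ind N l)) \<ge> t}
      else 0)"

definition downshift :: "real \<Rightarrow> real \<Rightarrow> (real \<Rightarrow> real) \<Rightarrow> real \<Rightarrow> real" where
  "downshift \<alpha> \<beta> \<rho> t =
     (let \<phi> = (if t \<le> 1 then \<rho> \<alpha> / \<beta> else \<rho> (\<alpha> * t) / \<beta>)
      in if 0 < \<phi> \<and> \<phi> < 1 then 1 else \<phi>)"

definition is_approx :: "real \<Rightarrow> real \<Rightarrow> (real \<Rightarrow> real) \<Rightarrow> (real \<Rightarrow> real) \<Rightarrow> bool" where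
  "is_approx \<alpha> \<beta> \<rho> \<rho>t \<longleftrightarrow>
     (\<forall>s t. 0 < s \<longrightarrow> s \<le> t \<longrightarrow> \<rho>t t \<le> \<rho>t s) \<and>
     (\<forall>t. 0 < t \<longrightarrow> 0 \<le> \<rho>t t \<and> downshift \<alpha> \<beta> \<rho> t \<le> \<rho>t t \<and> \<rho>t t \<le> \<rho> t)"

end

theory Submission
  imports Defs
begin



locale mat =
  fixes N :: "'a set" and Ind :: "'a set set"
  assumes mat: "matroid N Ind" and ll: "loopless N Ind"
begin

abbreviation r where "r \<equiv> mrank Ind"

lemma finN: "finite N" using mat by (simp add: matroid_def)
lemma indsub: "I \<in> Ind \<Longrightarrow> I \<subseteq> N" using mat by (auto simp: matroid_def)
lemma ind_empty: "{} \<in> Ind" using mat by (simp add: matroid_def)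
lemma ind_down: "J \<in> Ind \<Longrightarrow> I \<subseteq> J \<Longrightarrow> I \<in> Ind" using mat unfolding matroid_def by blast
lemma ind_aug: "I \<in> Ind \<Longrightarrow> J \<in> Ind \<Longrightarrow> card I < card J \<Longrightarrow> \<exists>e\<in>J - I. insert e I \<in> Ind"
  using mat unfolding matroid_def by blast
lemma ind_fin: "I \<in> Ind \<Longrightarrow> finite I" using indsub finN finite_subset by blast

lemma rset_fin: "finite {card I |I. I \<in> Ind \<and> I \<subseteq> U}"
proof -
  have "{card I |I. I \<in> Ind \<and> I \<subseteq> U} \<subseteq> card ` Pow N" using indsub by auto
  thus ?thesis using finN by (meson finite_Pow_iff finite_imageI finite_subset)
qed
lemma rset_ne: "{card I |I. I \<in> Ind \<and> I \<subseteq> U} \<noteq> {}" using ind_empty by blast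

lemma rank_ge: "I \<in> Ind \<Longrightarrow> I \<subseteq> U \<Longrightarrow> card I \<le> r U"
  unfolding mrank_def using rset_fin by (intro Max_ge) auto

lemma rank_obtain: "\<exists>I. I \<in> Ind \<and> I \<subseteq> U \<and> card I = r U"
proof -
  have "r U \<in> {card I |I. I \<in> Ind \<and> I \<subseteq> U}" unfolding mrank_def
    using rset_fin rset_ne by (rule Max_in)
  thus ?thesis by auto
qed

lemma rank_le_card: "finite U \<Longrightarrow> r U \<le> card U"
  using rank_obtain[of U] by (metis card_mono)

lemma rank_mono: "U \<subseteq> V \<Longrightarrow> r U \<le> r V"
  using rank_obtain[of U] rank_ge by (metis order_trans)

lemma rank_indep: "I \<in> Ind \<Longrightarrow> r I = card I"
  using rank_ge[of I I] rank_le_card[of I] ind_fin by fastforce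

lemma extend: "I \<in> Ind \<Longrightarrow> I \<subseteq> U \<Longrightarrow> \<exists>K. K \<in> Ind \<and> I \<subseteq> K \<and> K \<subseteq> U \<and> card K = r U"
proof (induction "r U - card I" arbitrary: I rule: less_induct)
  case less
  show ?case
  proof (cases "card I < r U")
    case False
    then show ?thesis using less.prems rank_ge[of I U] by (intro exI[of _ I]) auto
  next
    case True
    obtain B where B: "B \<in> Ind" "B \<subseteq> U" "card B = r U" using rank_obtain by blast
    then obtain e where e: "e \<in> B - I" "insert e I \<in> Ind" using ind_aug[of I B] less.prems True by auto
    have fin: "finite I" using less.prems ind_fin by blast
    have c: "card (insert e I) = card I + 1" using e fin by simp
    have "r U - card (insert e I) < r U - card I" using c True by simp
    from less.hyps[OF this e(2)] e B less.prems
    obtain K where "K \<in> Ind" "insert e I \<subseteq> K" "K \<subseteq> U" "card K = r U" by auto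
    thus ?thesis by blast
  qed
qed

lemma submod: "r (U \<union> V) + r (U \<inter> V) \<le> r U + r V"
proof -
  obtain I where I: "I \<in> Ind" "I \<subseteq> U \<inter> V" "card I = r (U \<inter> V)" using rank_obtain by blast
  obtain K where K: "K \<in> Ind" "I \<subseteq> K" "K \<subseteq> U \<union> V" "card K = r (U \<union> V)"
    using extend[of I "U \<union> V"] I by blast
  have finK: "finite K" using K ind_fin by blast
  have a: "card (K \<inter> U) \<le> r U" using K by (intro rank_ge) (auto intro: ind_down)
  have b: "card (K \<inter> V) \<le> r V" using K by (intro rank_ge) (auto intro: ind_down)
  have "K \<inter> U \<inter> V \<in> Ind" by (rule ind_down[OF K(1)]) auto
  hence "card (K \<inter> U \<inter> V) \<le> r (U \<inter> V)" by (rule rank_ge) auto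
  hence c: "card (K \<inter> U \<inter> V) \<le> card I" using I(3) by simp
  have eq: "K = (K \<inter> U) \<union> (K \<inter> V)" using K by auto
  have "card K + card (K \<inter> U \<inter> V) = card (K \<inter> U) + card (K \<inter> V)"
    using card_Un_Int[of "K \<inter> U" "K \<inter> V"] finK eq by (metis Int_assoc Int_left_commute inf.idem finite_Int)
  moreover have "card I \<le> card (K \<inter> U \<inter> V)" using I K finK by (intro card_mono) auto
  ultimately show ?thesis using a b c I K by linarith
qed

lemma rank_pos: "U \<subseteq> N \<Longrightarrow> U \<noteq> {} \<Longrightarrow> 1 \<le> r U"
proof -
  assume "U \<subseteq> N" "U \<noteq> {}"
  then obtain e where "e \<in> U" "e \<in> N" by auto
  hence "{e} \<in> Ind" using ll by (simp add: loopless_def)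
  thus ?thesis using rank_ge[of "{e}" U] \<open>e \<in> U\<close> by simp
qed

lemma rank_insert: "r (insert e U) \<le> r U + 1"
proof -
  have "r ({e} \<union> U) + r ({e} \<inter> U) \<le> r {e} + r U" by (rule submod)
  moreover have "r {e} \<le> 1" using rank_le_card[of "{e}"] by simp
  ultimately show ?thesis by simp
qed

lemma rank_union_le: "finite V \<Longrightarrow> r (U \<union> V) \<le> r U + card V"
proof (induction V rule: finite_induct)
  case empty thus ?case by simp
next
  case (insert x F)
  have "r (U \<union> insert x F) = r (insert x (U \<union> F))" by simp
  also have "\<dots> \<le> r (U \<union> F) + 1" by (rule rank_insert)
  finally show ?case using insert by simp
qed

lemma closure_rank: "finite Y \<Longrightarrow> (\<forall>e\<in>Y. r (insert e J) = r J) \<Longrightarrow> r (J \<union> Y) = r J"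
proof (induction Y rule: finite_induct)
  case empty thus ?case by simp
next
  case (insert x F)
  have IH: "r (J \<union> F) = r J" using insert by auto
  have hx: "r (insert x J) = r J" using insert by auto
  have eq: "(J \<union> F) \<union> insert x J = J \<union> insert x F" by auto
  have "r (J \<union> insert x F) + r ((J \<union> F) \<inter> insert x J) \<le> r (J \<union> F) + r (insert x J)"
    using submod[of "J \<union> F" "insert x J"] unfolding eq .
  moreover have "J \<subseteq> (J \<union> F) \<inter> insert x J" by auto
  hence "r J \<le> r ((J \<union> F) \<inter> insert x J)" by (rule rank_mono)
  ultimately have "r (J \<union> insert x F) \<le> r J" using IH hx by linarith
  moreover have "r J \<le> r (J \<union> insert x F)" by (rule rank_mono) auto
  ultimately show ?case by simp
qed

end




context mat begin

definition fv :: "real \<Rightarrow> 'a set \<Rightarrow> real" where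
  "fv l U = real (card U) - l * real (r U)"

lemma dmax_iff: "is_dmax Ind S l U \<longleftrightarrow> U \<subseteq> S \<and> (\<forall>V. V \<subseteq> S \<longrightarrow> fv l V \<le> fv l U)"
  by (simp add: is_dmax_def fv_def)

lemma supermod:
  assumes "U \<subseteq> N" "V \<subseteq> N" "0 \<le> l"
  shows "fv l U + fv l V \<le> fv l (U \<union> V) + fv l (U \<inter> V)"
proof -
  have fin: "finite U" "finite V" using finite_subset[OF assms(1) finN] finite_subset[OF assms(2) finN] by auto
  have c: "card (U \<union> V) + card (U \<inter> V) = card U + card V" using card_Un_Int[OF fin] by simp
  have s: "real (r (U \<union> V)) + real (r (U \<inter> V)) \<le> real (r U) + real (r V)"
    using submod[of U V] by linarith
  have "l * (real (r (U \<union> V)) + real (r (U \<inter> V))) \<le> l * (real (r U) + real (r V))"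
    using s assms(3) by (rule mult_left_mono)
  have cr: "real (card (U \<union> V)) + real (card (U \<inter> V)) = real (card U) + real (card V)"
    using c by (metis of_nat_add)
  have "l * real (r (U \<union> V)) + l * real (r (U \<inter> V)) \<le> l * real (r U) + l * real (r V)"
    using \<open>l * _ \<le> _\<close> by (simp add: distrib_left)
  thus ?thesis unfolding fv_def using cr by linarith
qed

lemma dmax_ex: assumes "S \<subseteq> N" shows "\<exists>U. is_dmax Ind S l U"
proof -
  have fin: "finite (fv l ` Pow S)" using assms finN by (meson finite_Pow_iff finite_imageI finite_subset)
  have "Max (fv l ` Pow S) \<in> fv l ` Pow S" using fin by (intro Max_in) auto
  then obtain U where U: "U \<subseteq> S" "fv l U = Max (fv l ` Pow S)" by auto
  have "\<forall>V. V \<subseteq> S \<longrightarrow> fv l V \<le> fv l U" using U fin by (auto intro: Max_ge)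
  thus ?thesis using U dmax_iff by blast
qed

lemma dmax_union:
  assumes "S \<subseteq> N" "0 \<le> l" "is_dmax Ind S l U" "is_dmax Ind S l V"
  shows "is_dmax Ind S l (U \<union> V)"
proof -
  have U: "U \<subseteq> S" "\<And>W. W \<subseteq> S \<Longrightarrow> fv l W \<le> fv l U" using assms(3) unfolding dmax_iff by auto
  have V: "V \<subseteq> S" "\<And>W. W \<subseteq> S \<Longrightarrow> fv l W \<le> fv l V" using assms(4) unfolding dmax_iff by auto
  have "fv l U + fv l V \<le> fv l (U \<union> V) + fv l (U \<inter> V)" using assms U V by (intro supermod) auto
  moreover have "U \<inter> V \<subseteq> S" using U(1) by blast
  hence "fv l (U \<inter> V) \<le> fv l V" by (rule V(2))
  ultimately have "fv l U \<le> fv l (U \<union> V)" by simp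
  moreover have "U \<union> V \<subseteq> S" using U V by simp
  ultimately show ?thesis unfolding dmax_iff using U(2) by (meson order_trans)
qed

lemma union_closed:
  assumes "finite G" "G \<noteq> {}" "G \<subseteq> F" "\<And>a b. a \<in> F \<Longrightarrow> b \<in> F \<Longrightarrow> a \<union> b \<in> F"
  shows "\<Union>G \<in> F"
  using assms(1,2,3)
proof (induction G rule: finite_ne_induct)
  case (singleton x) thus ?case by simp
next
  case (insert x G) thus ?case using assms(4) by simp
qed

definition Dstar where "Dstar S l = \<Union>{U. is_dmax Ind S l U}"

lemma Dstar:
  assumes "S \<subseteq> N" "0 \<le> l"
  shows "is_dmax Ind S l (Dstar S l)" "\<And>V. is_dmax Ind S l V \<Longrightarrow> V \<subseteq> Dstar S l"
proof -
  have fin: "finite {U. is_dmax Ind S l U}"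
  proof (rule finite_subset[of _ "Pow S"])
    show "{U. is_dmax Ind S l U} \<subseteq> Pow S" by (auto simp: is_dmax_def)
    show "finite (Pow S)" using finite_subset[OF assms(1) finN] by simp
  qed
  have ne: "{U. is_dmax Ind S l U} \<noteq> {}" using dmax_ex[OF assms(1)] by auto
  have "\<Union>{U. is_dmax Ind S l U} \<in> {U. is_dmax Ind S l U}"
    by (rule union_closed[OF fin ne order_refl]) (simp add: dmax_union[OF assms])
  thus "is_dmax Ind S l (Dstar S l)" unfolding Dstar_def by simp
  show "\<And>V. is_dmax Ind S l V \<Longrightarrow> V \<subseteq> Dstar S l" unfolding Dstar_def by auto
qed

lemma Dset_eq: assumes "S \<subseteq> N" "0 \<le> l" shows "Dset Ind S l = Dstar S l"
  unfolding Dset_def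
proof (rule the_equality)
  show "is_dmax Ind S l (Dstar S l) \<and> (\<forall>V. is_dmax Ind S l V \<longrightarrow> Dstar S l \<subseteq> V \<longrightarrow> V = Dstar S l)"
    using Dstar[OF assms] by blast
  fix U assume "is_dmax Ind S l U \<and> (\<forall>V. is_dmax Ind S l V \<longrightarrow> U \<subseteq> V \<longrightarrow> V = U)"
  thus "U = Dstar S l" using Dstar[OF assms] by blast
qed

lemma D_dmax: "S \<subseteq> N \<Longrightarrow> 0 \<le> l \<Longrightarrow> is_dmax Ind S l (Dset Ind S l)"
  by (subst Dset_eq) (auto intro: Dstar(1))
lemma D_max: "S \<subseteq> N \<Longrightarrow> 0 \<le> l \<Longrightarrow> is_dmax Ind S l V \<Longrightarrow> V \<subseteq> Dset Ind S l"
  by (subst Dset_eq) (auto simp: Dstar_def)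
lemma D_sub: "S \<subseteq> N \<Longrightarrow> 0 \<le> l \<Longrightarrow> Dset Ind S l \<subseteq> S"
  using D_dmax unfolding is_dmax_def by simp
lemma D_opt: "S \<subseteq> N \<Longrightarrow> 0 \<le> l \<Longrightarrow> V \<subseteq> S \<Longrightarrow> fv l V \<le> fv l (Dset Ind S l)"
  using D_dmax unfolding dmax_iff by simp

lemma D_mono_set:
  assumes "T \<subseteq> S" "S \<subseteq> N" "0 \<le> l"
  shows "Dset Ind T l \<subseteq> Dset Ind S l"
proof -
  let ?A = "Dset Ind T l" and ?B = "Dset Ind S l"
  have TN: "T \<subseteq> N" using assms by auto
  have A: "?A \<subseteq> T" using D_sub TN assms by blast
  have B: "?B \<subseteq> S" using D_sub assms by blast
  have "fv l ?A + fv l ?B \<le> fv l (?A \<union> ?B) + fv l (?A \<inter> ?B)"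
    using A B assms by (intro supermod) auto
  moreover have "fv l (?A \<inter> ?B) \<le> fv l ?A" using D_opt[OF TN assms(3)] A by blast
  ultimately have "fv l ?B \<le> fv l (?A \<union> ?B)" by simp
  moreover have "?A \<union> ?B \<subseteq> S" using A B assms(1) by blast
  ultimately have "is_dmax Ind S l (?A \<union> ?B)" unfolding dmax_iff
    using D_opt[OF assms(2,3)] by (meson order_trans)
  hence "?A \<union> ?B \<subseteq> ?B" using D_max assms by blast
  thus ?thesis by blast
qed

lemma D_small:
  assumes "S \<subseteq> N" "0 \<le> l" "l \<le> 1"
  shows "Dset Ind S l = S"
proof -
  have "\<forall>V. V \<subseteq> S \<longrightarrow> fv l V \<le> fv l S"
  proof (intro allI impI)
    fix V assume V: "V \<subseteq> S"
    have finS: "finite S" using finite_subset[OF assms(1) finN] by simp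
    have "S = V \<union> (S - V)" using V by auto
    hence "r S \<le> r V + card (S - V)" using rank_union_le[of "S - V" V] finS by simp
    hence h: "real (r S) - real (r V) \<le> real (card S) - real (card V)"
      using card_Diff_subset[of V S] V finS finite_subset[OF V finS] card_mono[OF finS V] by linarith
    have m: "0 \<le> real (r S) - real (r V)" using rank_mono[OF V] by simp
    have "l * (real (r S) - real (r V)) \<le> 1 * (real (r S) - real (r V))"
      using assms(3) m by (intro mult_right_mono) auto
    thus "fv l V \<le> fv l S" unfolding fv_def using h by (simp add: algebra_simps)
  qed
  hence "is_dmax Ind S l S" using dmax_iff by blast
  hence "S \<subseteq> Dset Ind S l" using D_max assms by blast
  thus ?thesis using D_sub assms by blast
qed

lemma D_big:
  assumes "S \<subseteq> N" "real (card N) < l"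
  shows "Dset Ind S l = {}"
proof (rule ccontr)
  assume ne: "Dset Ind S l \<noteq> {}"
  have l0: "0 \<le> l" using assms by linarith
  let ?D = "Dset Ind S l"
  have DN: "?D \<subseteq> N" using D_sub[OF assms(1) l0] assms by blast
  have "1 \<le> r ?D" using rank_pos[OF DN ne] .
  moreover have "card ?D \<le> card N" using DN finN card_mono by blast
  ultimately have "fv l ?D < 0"
  proof -
    assume a: "1 \<le> r ?D" "card ?D \<le> card N"
    have "l * 1 \<le> l * real (r ?D)" using a(1) l0 by (intro mult_left_mono) auto
    moreover have "real (card ?D) \<le> real (card N)" using a(2) by simp
    ultimately show ?thesis unfolding fv_def using assms(2) by linarith
  qed
  moreover have "fv l {} \<le> fv l ?D" using D_opt[OF assms(1) l0] by blast
  moreover have "fv l {} = 0" unfolding fv_def using rank_le_card[of "{}"] by simp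
  ultimately show False by simp
qed

lemma D_rank_inj:
  assumes "S \<subseteq> N" "0 \<le> l" "l \<le> l'" "r (Dset Ind S l) = r (Dset Ind S l')"
  shows "Dset Ind S l = Dset Ind S l'"
proof -
  let ?A = "Dset Ind S l" and ?B = "Dset Ind S l'"
  have l': "0 \<le> l'" using assms by linarith
  have A: "?A \<subseteq> S" and B: "?B \<subseteq> S" using D_sub assms l' by auto
  have 1: "fv l ?B \<le> fv l ?A" using D_opt[OF assms(1,2) B] .
  have 2: "fv l' ?A \<le> fv l' ?B" using D_opt[OF assms(1) l' A] .
  have "card ?B \<le> card ?A" using 1 assms(4) unfolding fv_def by simp
  moreover have "card ?A \<le> card ?B" using 2 assms(4) unfolding fv_def by simp
  ultimately have eqc: "card ?A = card ?B" by simp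
  hence "fv l ?B = fv l ?A" unfolding fv_def using assms(4) by simp
  hence "is_dmax Ind S l ?B" using D_opt[OF assms(1,2)] B dmax_iff by auto
  hence "?B \<subseteq> ?A" using D_max assms by blast
  moreover have "finite ?A" using finite_subset[OF A finite_subset[OF assms(1) finN]] by simp
  ultimately show ?thesis using eqc by (metis card_subset_eq)
qed

lemma D_dense:
  assumes "S \<subseteq> N" "0 \<le> l" "U \<subseteq> Dset Ind S l"
  shows "l * (real (r (Dset Ind S l)) - real (r U)) \<le> real (card (Dset Ind S l)) - real (card U)"
proof -
  have "U \<subseteq> S" using assms D_sub by blast
  hence "fv l U \<le> fv l (Dset Ind S l)" using D_opt assms by blast
  thus ?thesis unfolding fv_def by (simp add: algebra_simps)
qed

lemma restr_rank: assumes "U \<subseteq> S" shows "mrank (restr_ind Ind S) U = r U"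
proof -
  have "{card I |I. I \<in> restr_ind Ind S \<and> I \<subseteq> U} = {card I |I. I \<in> Ind \<and> I \<subseteq> U}"
    using assms unfolding restr_ind_def by blast
  thus ?thesis unfolding mrank_def by simp
qed

lemma restr_D: assumes "S \<subseteq> N" shows "Dset (restr_ind Ind S) S l = Dset Ind S l"
proof -
  have "\<And>U. is_dmax (restr_ind Ind S) S l U = is_dmax Ind S l U"
    unfolding is_dmax_def using restr_rank by (smt (verit, ccfv_threshold) dual_order.trans)
  thus ?thesis unfolding Dset_def by simp
qed

end




context mat begin

definition Lset where "Lset S t = {l. 0 \<le> l \<and> t \<le> real (r (Dset Ind S l))}"
definition rd where "rd S t = (if 0 < t \<and> t \<le> real (r S) then Sup (Lset S t) else 0)"

lemma rd_N: "rank_density N Ind = rd N"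
  by (rule ext) (simp add: rank_density_def rd_def Lset_def)

lemma rd_restr: assumes "S \<subseteq> N" shows "rank_density S (restr_ind Ind S) = rd S"
proof (rule ext)
  fix t
  have "{l. 0 \<le> l \<and> t \<le> real (mrank (restr_ind Ind S) (Dset (restr_ind Ind S) S l))} = Lset S t"
  proof -
    have "\<And>l. 0 \<le> l \<Longrightarrow> mrank (restr_ind Ind S) (Dset (restr_ind Ind S) S l) = r (Dset Ind S l)"
      using restr_D[OF assms] restr_rank D_sub[OF assms] by metis
    thus ?thesis unfolding Lset_def by (metis (lifting))
  qed
  moreover have "mrank (restr_ind Ind S) S = r S" using restr_rank by simp
  ultimately show "rank_density S (restr_ind Ind S) t = rd S t"
    unfolding rank_density_def rd_def by simp
qed

lemma Lset_bdd: assumes "S \<subseteq> N" "0 < t" shows "bdd_above (Lset S t)"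
proof (rule bdd_aboveI[of _ "real (card N)"])
  fix l assume l: "l \<in> Lset S t"
  show "l \<le> real (card N)"
  proof (rule ccontr)
    assume "\<not> l \<le> real (card N)"
    hence "Dset Ind S l = {}" using D_big[OF assms(1)] by simp
    hence "r (Dset Ind S l) = 0" using rank_le_card[of "{}"] by simp
    thus False using l assms(2) unfolding Lset_def by simp
  qed
qed

lemma Lset_0: assumes "S \<subseteq> N" "t \<le> real (r S)" shows "0 \<in> Lset S t"
  using D_small[OF assms(1)] assms(2) unfolding Lset_def by simp

lemma rd_nonneg: assumes "S \<subseteq> N" shows "0 \<le> rd S t"
proof (cases "0 < t \<and> t \<le> real (r S)")
  case True
  thus ?thesis unfolding rd_def using Lset_0[OF assms] Lset_bdd[OF assms]
    by (simp add: cSup_upper)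
next
  case False thus ?thesis unfolding rd_def by auto
qed

lemma rd_mono: assumes "S \<subseteq> N" "0 < s" "s \<le> t" shows "rd S t \<le> rd S s"
proof (cases "t \<le> real (r S)")
  case True
  have sub: "Lset S t \<subseteq> Lset S s" unfolding Lset_def using assms by auto
  have "Sup (Lset S t) \<le> Sup (Lset S s)"
    using Lset_0[OF assms(1) True] Lset_bdd[OF assms(1,2)] sub by (intro cSup_subset_mono) auto
  thus ?thesis unfolding rd_def using True assms by simp
next
  case False
  thus ?thesis using rd_nonneg[OF assms(1)] unfolding rd_def[of S t] by simp
qed

lemma rd_le: assumes "S \<subseteq> N" "0 < t" shows "rd S t \<le> rd N t"
proof (cases "t \<le> real (r S)")
  case True
  have rSN: "r S \<le> r N" using rank_mono assms by simp
  have sub: "Lset S t \<subseteq> Lset N t" unfolding Lset_def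
  proof clarify
    fix l assume "0 \<le> l" "t \<le> real (r (Dset Ind S l))"
    moreover have "r (Dset Ind S l) \<le> r (Dset Ind N l)"
      using D_mono_set[OF assms(1) order_refl \<open>0 \<le> l\<close>] rank_mono by blast
    ultimately show "t \<le> real (r (Dset Ind N l))" by linarith
  qed
  have "Sup (Lset S t) \<le> Sup (Lset N t)"
    using Lset_0[OF assms(1) True] Lset_bdd[OF order_refl assms(2)] sub by (intro cSup_subset_mono) auto
  thus ?thesis unfolding rd_def using True assms rSN by auto
next
  case False
  thus ?thesis using rd_nonneg[OF order_refl] unfolding rd_def[of S t] by simp
qed

lemma rd_ge: assumes "S \<subseteq> N" "0 < t" "0 \<le> mu" "t \<le> real (r (Dset Ind S mu))"
  shows "mu \<le> rd S t"
proof -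
  have "r (Dset Ind S mu) \<le> r S" using D_sub[OF assms(1,3)] rank_mono by blast
  hence tS: "t \<le> real (r S)" using assms(4) by linarith
  have "mu \<in> Lset S t" unfolding Lset_def using assms by simp
  hence "mu \<le> Sup (Lset S t)" using Lset_bdd[OF assms(1,2)] by (simp add: cSup_upper)
  thus ?thesis unfolding rd_def using tS assms by simp
qed

lemma rd_N_bound:
  assumes "0 < t" "0 < rd N t"
    and H: "\<And>l. 0 < l \<Longrightarrow> t \<le> real (r (Dset Ind N l)) \<Longrightarrow> 1 \<le> g \<and> l / 9 \<le> g"
  shows "1 \<le> g \<and> rd N t / 9 \<le> g"
proof -
  have tN: "t \<le> real (r N)" using assms(2) unfolding rd_def by (auto split: if_splits)
  have rdN: "rd N t = Sup (Lset N t)" unfolding rd_def using tN assms(1) by simp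
  have ne: "Lset N t \<noteq> {}" using Lset_0[OF order_refl tN] by blast
  have "\<exists>l\<in>Lset N t. 0 < l"
  proof (rule ccontr)
    assume "\<not> ?thesis"
    hence "\<forall>l\<in>Lset N t. l \<le> 0" by auto
    hence "Sup (Lset N t) \<le> 0" using ne by (intro cSup_least) auto
    thus False using assms(2) rdN by simp
  qed
  then obtain l0 where "l0 \<in> Lset N t" "0 < l0" by blast
  hence g1: "1 \<le> g" using H unfolding Lset_def by auto
  have "Sup (Lset N t) \<le> 9 * g"
  proof (rule cSup_least[OF ne])
    fix l assume l: "l \<in> Lset N t"
    show "l \<le> 9 * g"
    proof (cases "0 < l")
      case True thus ?thesis using H[of l] l unfolding Lset_def by auto
    next
      case False thus ?thesis using g1 by simp
    qed
  qed
  thus ?thesis using g1 rdN by simp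
qed

end




lemma gen_sum:
  fixes z :: real
  assumes "finite N" "Y \<subseteq> N"
  shows "(\<Sum>S\<in>Pow N. z ^ card (S \<inter> Y)) = 2 ^ (card N - card Y) * (1 + z) ^ card Y"
proof -
  let ?f = "\<lambda>x. if x \<in> Y then z else 1"
  have "(\<Prod>x\<in>N. ?f x + 1) = (\<Sum>X\<in>Pow N. (\<Prod>x\<in>X. ?f x) * (\<Prod>x\<in>N - X. 1))"
    by (rule prod_add[OF assms(1)])
  moreover have "\<And>X. X \<in> Pow N \<Longrightarrow> (\<Prod>x\<in>X. ?f x) = z ^ card (X \<inter> Y)"
  proof -
    fix X assume "X \<in> Pow N"
    hence fX: "finite X" using assms(1) finite_subset by auto
    have "(\<Prod>x\<in>X. ?f x) = prod (\<lambda>x. z) {x \<in> X. x \<in> Y}"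
      using prod.inter_filter[OF fX, of "\<lambda>x. z" "\<lambda>x. x \<in> Y"] by simp
    also have "{x \<in> X. x \<in> Y} = X \<inter> Y" by auto
    finally show "(\<Prod>x\<in>X. ?f x) = z ^ card (X \<inter> Y)" by simp
  qed
  moreover have "(\<Prod>x\<in>N. ?f x + 1) = (1 + z) ^ card Y * 2 ^ (card N - card Y)"
  proof -
    have "(\<Prod>x\<in>N. ?f x + 1) = (\<Prod>x\<in>N. if x \<in> Y then z + 1 else 2)"
      by (rule prod.cong) auto
    also have "\<dots> = (\<Prod>x\<in>N \<inter> {x. x \<in> Y}. z + 1) * (\<Prod>x\<in>N \<inter> - {x. x \<in> Y}. 2)"
      by (rule prod.If_cases[OF assms(1)])
    also have "N \<inter> {x. x \<in> Y} = Y" using assms by auto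
    also have "N \<inter> - {x. x \<in> Y} = N - Y" by auto
    finally have "(\<Prod>x\<in>N. ?f x + 1) = (1+z) ^ card Y * 2 ^ card (N - Y)" by (simp add: add.commute)
    moreover have "card (N - Y) = card N - card Y" using assms card_Diff_subset finite_subset by metis
    ultimately show ?thesis by simp
  qed
  ultimately show ?thesis by (simp add: mult.commute)
qed

lemma count_bound:
  fixes z :: real
  assumes "finite N" "Y \<subseteq> N" "0 < z" "z \<le> 1"
  shows "real (card {S \<in> Pow N. card (S \<inter> Y) \<le> m}) * z ^ m \<le> 2 ^ (card N - card Y) * (1 + z) ^ card Y"
proof -
  let ?B = "{S \<in> Pow N. card (S \<inter> Y) \<le> m}"
  have finP: "finite (Pow N)" using assms by simp
  have "real (card ?B) * z ^ m = (\<Sum>S\<in>?B. z ^ m)" by simp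
  also have "\<dots> \<le> (\<Sum>S\<in>?B. z ^ card (S \<inter> Y))"
    using assms by (intro sum_mono power_decreasing) auto
  also have "\<dots> \<le> (\<Sum>S\<in>Pow N. z ^ card (S \<inter> Y))"
    using assms finP by (intro sum_mono2) auto
  also have "\<dots> = 2 ^ (card N - card Y) * (1 + z) ^ card Y" by (rule gen_sum[OF assms(1,2)])
  finally show ?thesis .
qed




lemma n1: "(17/16::real)^288 * (5/8)^143 * 4^32 \<le> 1" by (simp add: power_divide)
lemma n2: "16 * (5/8::real)^144 * 4^32 \<le> 1/2^20" by (simp add: power_divide)
lemma n3: "(5/8::real)^288 * 4 \<le> 1/2^20" by (simp add: power_divide)




context mat begin

definition Ib where "Ib X = (SOME I. I \<in> Ind \<and> I \<subseteq> X \<and> card I = r X)"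

lemma Ib: "Ib X \<in> Ind" "Ib X \<subseteq> X" "card (Ib X) = r X"
proof -
  have "Ib X \<in> Ind \<and> Ib X \<subseteq> X \<and> card (Ib X) = r X"
    unfolding Ib_def using rank_obtain[of X] by (rule someI_ex)
  thus "Ib X \<in> Ind" "Ib X \<subseteq> X" "card (Ib X) = r X" by auto
qed

primrec Pg :: "'a set \<Rightarrow> nat \<Rightarrow> 'a set" where
  "Pg A 0 = {}"
| "Pg A (Suc i) = Pg A i \<union> Ib (A - Pg A i)"

lemma Pg_sub: "Pg A i \<subseteq> A"
  by (induction i) (use Ib(2) in auto)

lemma Pg_card: "A \<subseteq> N \<Longrightarrow> card (Pg A i) \<le> i * r A"
proof (induction i)
  case 0 thus ?case by simp
next
  case (Suc i)
  have "card (Pg A (Suc i)) \<le> card (Pg A i) + card (Ib (A - Pg A i))"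
    by (simp add: card_Un_le)
  also have "card (Ib (A - Pg A i)) \<le> r A" using Ib(3) rank_mono[of "A - Pg A i" A] by auto
  finally show ?case using Suc by simp
qed

definition Xs where "Xs J = {e \<in> N. r J < r (insert e J)}"

lemma indep_out:
  assumes J: "J \<in> Ind" and B: "B \<in> Ind"
  shows "card B \<le> card (B \<inter> Xs J) + card J"
proof -
  have finB: "finite B" using B ind_fin by blast
  let ?Y = "B - Xs J"
  have Yf: "finite ?Y" using finB by simp
  have "\<forall>e\<in>?Y. r (insert e J) = r J"
  proof
    fix e assume e: "e \<in> ?Y"
    hence "e \<in> N" using indsub B by blast
    hence "\<not> r J < r (insert e J)" using e unfolding Xs_def by blast
    moreover have "r J \<le> r (insert e J)" by (rule rank_mono) auto
    ultimately show "r (insert e J) = r J" by simp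
  qed
  hence "r (J \<union> ?Y) = r J" by (rule closure_rank[OF Yf])
  moreover have "?Y \<in> Ind" by (rule ind_down[OF B]) auto
  hence "card ?Y = r ?Y" using rank_indep by simp
  moreover have "r ?Y \<le> r (J \<union> ?Y)" by (rule rank_mono) auto
  moreover have "r J = card J" using rank_indep J by simp
  ultimately have "card ?Y \<le> card J" by simp
  moreover have "card B = card (B \<inter> Xs J) + card ?Y"
    using finB by (metis Diff_Diff_Int Diff_subset card_Diff_subset_Int card_Diff_subset finite_Diff
          Int_commute le_add_diff_inverse card_mono inf_le1 finite_Int add.commute)
  ultimately show ?thesis by linarith
qed

definition Rset where "Rset A = {real (card (A - U)) / (real (r A) - real (r U)) | U. U \<subseteq> A \<and> r U < r A}"
definition lamA where "lamA A = Min (Rset A)"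

lemma Rset_fin: "finite A \<Longrightarrow> finite (Rset A)"
proof -
  assume "finite A"
  moreover have "Rset A \<subseteq> (\<lambda>U. real (card (A - U)) / (real (r A) - real (r U))) ` Pow A"
    unfolding Rset_def by auto
  ultimately show ?thesis by (meson finite_Pow_iff finite_imageI finite_subset)
qed

lemma rank_empty: "r {} = 0" using rank_le_card[of "{}"] by simp

lemma Rset_ne: "0 < r A \<Longrightarrow> Rset A \<noteq> {}"
  unfolding Rset_def using rank_empty by auto

lemma lam_dense:
  assumes "A \<subseteq> N" "0 < r A" "U \<subseteq> A"
  shows "lamA A * (real (r A) - real (r U)) \<le> real (card (A - U))"
proof (cases "r U < r A")
  case True
  have finA: "finite A" using finite_subset[OF assms(1) finN] .
  have "real (card (A - U)) / (real (r A) - real (r U)) \<in> Rset A" unfolding Rset_def using True assms by auto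
  hence "lamA A \<le> real (card (A - U)) / (real (r A) - real (r U))"
    unfolding lamA_def using Rset_fin[OF finA] by (simp add: Min_le)
  moreover have "0 < real (r A) - real (r U)" using True by simp
  ultimately show ?thesis by (simp add: pos_le_divide_eq)
next
  case False
  hence "r U = r A" using rank_mono[OF assms(3)] by simp
  thus ?thesis by simp
qed

lemma lam_ge:
  assumes "0 \<le> l" "0 < r (Dset Ind N l)"
  shows "l \<le> lamA (Dset Ind N l)"
proof -
  let ?A = "Dset Ind N l"
  have finA: "finite ?A" using finite_subset[OF D_sub[OF order_refl assms(1)] finN] .
  have "\<forall>x\<in>Rset ?A. l \<le> x"
  proof
    fix x assume "x \<in> Rset ?A"
    then obtain U where U: "U \<subseteq> ?A" "r U < r ?A" "x = real (card (?A - U)) / (real (r ?A) - real (r U))"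
      unfolding Rset_def by auto
    have "l * (real (r ?A) - real (r U)) \<le> real (card ?A) - real (card U)"
      using D_dense[OF order_refl assms(1) U(1)] .
    moreover have "real (card (?A - U)) = real (card ?A) - real (card U)"
      using U(1) finA by (simp add: card_Diff_subset finite_subset of_nat_diff card_mono)
    moreover have "0 < real (r ?A) - real (r U)" using U(2) by simp
    ultimately show "l \<le> x" using U(3) by (simp add: pos_le_divide_eq)
  qed
  thus ?thesis unfolding lamA_def using Rset_fin[OF finA] Rset_ne[OF assms(2)] by simp
qed

lemma Pg_key:
  assumes A: "A \<subseteq> N" "0 < r A" and lp: "0 < lamA A" and J: "J \<in> Ind"
  shows "real i * real (r A) - real (r A) * (real i * (real i - 1)) / (2 * lamA A) - real i * real (card J)
         \<le> real (card (Pg A i \<inter> Xs J))"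
proof (induction i)
  case 0 thus ?case by simp
next
  case (Suc i)
  let ?P = "Pg A i" and ?B = "Ib (A - Pg A i)" and ?X = "Xs J" and ?k = "real (r A)" and ?l = "lamA A"
  have finA: "finite A" using finite_subset[OF A(1) finN] .
  have PA: "?P \<subseteq> A" by (rule Pg_sub)
  have BA: "?B \<subseteq> A - ?P" by (rule Ib(2))
  have finP: "finite ?P" using finite_subset[OF PA finA] .
  have finB: "finite ?B" using finite_subset[OF BA] finA by blast
  have disj: "(?P \<inter> ?X) \<inter> (?B \<inter> ?X) = {}" using BA by blast
  have "Pg A (Suc i) \<inter> ?X = (?P \<inter> ?X) \<union> (?B \<inter> ?X)" by auto
  hence c1: "card (Pg A (Suc i) \<inter> ?X) = card (?P \<inter> ?X) + card (?B \<inter> ?X)"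
    using card_Un_disjoint[OF _ _ disj] finP finB by simp
  have c2: "card ?B \<le> card (?B \<inter> ?X) + card J" using indep_out[OF J Ib(1)] .
  have "?l * (?k - real (r (A - ?P))) \<le> real (card (A - (A - ?P)))"
    using lam_dense[OF A, of "A - ?P"] by auto
  moreover have "A - (A - ?P) = ?P" using PA by blast
  moreover have "card ?P \<le> i * r A" using Pg_card[OF A(1)] .
  ultimately have "?l * (?k - real (card ?B)) \<le> real i * ?k" using Ib(3)
    by (metis of_nat_le_iff of_nat_mult order_trans)
  hence "?l * ?k - real i * ?k \<le> ?l * real (card ?B)" by (simp add: algebra_simps)
  hence c3: "?k - real i * ?k / ?l \<le> real (card ?B)" using lp by (simp add: field_simps)
  have eq: "real (Suc i) * ?k - ?k * (real (Suc i) * (real (Suc i) - 1)) / (2 * ?l) - real (Suc i) * real (card J)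
     = (real i * ?k - ?k * (real i * (real i - 1)) / (2 * ?l) - real i * real (card J))
       + (?k - real i * ?k / ?l - real (card J))"
    using lp by (simp add: field_simps)
  show ?case unfolding eq using Suc c1 c2 c3 by linarith
qed

lemma arith_aux: "(x::real) - D - y \<le> c \<Longrightarrow> D \<le> E \<Longrightarrow> 288 * y \<le> x \<Longrightarrow> 2 * E = x - k
   \<Longrightarrow> G = 143 * x + 144 * k \<Longrightarrow> G \<le> 288 * c" by linarith

lemma W_bound:
  assumes A: "A \<subseteq> N" "0 < r A" and l1: "1 \<le> lamA A" and J: "J \<in> Ind" and j: "288 * card J \<le> r A"
  shows "r A * (143 * nat \<lfloor>lamA A\<rfloor> + 144) \<le> 288 * card (Pg A (nat \<lfloor>lamA A\<rfloor>) \<inter> Xs J)"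
proof -
  let ?L = "nat \<lfloor>lamA A\<rfloor>" and ?k = "real (r A)" and ?l = "lamA A"
  have Ll: "real ?L \<le> ?l" using l1 by linarith
  have fl: "1 \<le> \<lfloor>?l\<rfloor>" using l1 by (simp add: le_floor_iff)
  hence "real ?L = real_of_int \<lfloor>?l\<rfloor>" by simp
  hence L1: "1 \<le> real ?L" using fl by simp
  have key: "real ?L * ?k - ?k * (real ?L * (real ?L - 1)) / (2 * ?l) - real ?L * real (card J)
      \<le> real (card (Pg A ?L \<inter> Xs J))"
    using Pg_key[OF A _ J, of ?L] l1 by linarith
  have "?k * (real ?L * (real ?L - 1)) / (2 * ?l) \<le> ?k * (real ?L - 1) / 2"
  proof -
    have "?k * (real ?L * (real ?L - 1)) = (?k * (real ?L - 1)) * real ?L" by simp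
    also have "\<dots> \<le> (?k * (real ?L - 1)) * ?l" using Ll L1 by (intro mult_left_mono) auto
    finally show ?thesis using l1 by (simp add: field_simps)
  qed
  moreover have "288 * (real ?L * real (card J)) \<le> real ?L * ?k"
  proof -
    have "288 * real (card J) \<le> ?k" using j by (metis of_nat_le_iff of_nat_mult of_nat_numeral)
    thus ?thesis using L1 by (simp add: mult.left_commute mult_left_mono)
  qed
  moreover have "2 * (?k * (real ?L - 1) / 2) = real ?L * ?k - ?k" by (simp add: field_simps)
  moreover have "?k * (143 * real ?L + 144) = 143 * (real ?L * ?k) + 144 * ?k" by (simp add: algebra_simps)
  ultimately have "?k * (143 * real ?L + 144) \<le> 288 * real (card (Pg A ?L \<inter> Xs J))"
    using key by (rule_tac arith_aux) assumption+
  thus ?thesis by (metis (mono_tags, lifting) of_nat_le_iff of_nat_mult of_nat_add of_nat_numeral)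
qed

end




definition c0 :: real where "c0 = root 288 (1 / 2 ^ 20)"

lemma c0_pow: "c0 ^ 288 = 1 / 2 ^ 20" unfolding c0_def by simp
lemma c0_nonneg: "0 \<le> c0" unfolding c0_def by simp

lemma le_c0: assumes "0 \<le> Q" "Q ^ 288 \<le> (1 / 2 ^ 20) ^ k" shows "Q \<le> c0 ^ k"
proof -
  have "(c0 ^ k) ^ 288 = (c0 ^ 288) ^ k" by (metis power_mult mult.commute)
  hence "(c0 ^ k) ^ 288 = (1 / 2 ^ 20) ^ k" using c0_pow by simp
  hence "Q ^ Suc 287 \<le> (c0 ^ k) ^ Suc 287" using assms by simp
  thus ?thesis using power_le_imp_le_base c0_nonneg by (meson zero_le_power)
qed

lemma big_num: "(5 / 8 :: real) ^ 288 * 4 \<le> 1 / 2 ^ 20" by (rule n3)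


lemma ar1: "(a::nat) \<le> 288 * ((a + 287) div 288)"
proof -
  have "(a + 287) div 288 * 288 + (a + 287) mod 288 = a + 287" by (rule div_mult_mod_eq)
  moreover have "(a + 287) mod 288 < 288" by simp
  ultimately show ?thesis by linarith
qed
lemma ar2: "288 * (((a::nat) + b) div 9) \<le> 32 * a + 32 * b"
proof -
  have "(a + b) div 9 * 9 \<le> a + b" by (rule div_times_less_eq_dividend)
  thus ?thesis by linarith
qed

lemma E1: "((x1::real) ^ w * x2 ^ j * (x3 ^ y * x4 ^ m)) ^ 288 = x1 ^ (288 * w) * x2 ^ (288 * j) * (x3 ^ (288 * y) * x4 ^ (288 * m))"
  by (simp add: power_mult_distrib power_mult mult.commute)

lemma E3: "(x1::real) ^ (288 * (L * k)) * x2 ^ k * (x3 ^ (143 * (L * k) + 144 * k) * x4 ^ (32 * (L * k) + 32 * k))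
   = (x1 ^ 288 * x3 ^ 143 * x4 ^ 32) ^ (L * k) * (x2 * x3 ^ 144 * x4 ^ 32) ^ k"
  by (simp add: power_mult_distrib power_mult power_add)

lemma E4: "0 \<le> (g::real) \<Longrightarrow> g \<le> 1 \<Longrightarrow> 0 \<le> d \<Longrightarrow> d \<le> e \<Longrightarrow> g ^ n * d ^ k \<le> 1 * e ^ k"
  by (intro mult_mono power_le_one power_mono) auto

context mat begin

definition "Lw A = nat \<lfloor>lamA A\<rfloor>"
definition "Wa A = Pg A (Lw A)"
definition "j0 A = r A div 288"
definition "m0 A = ((Lw A + 1) * r A) div 9"
definition "bad2 A T \<longleftrightarrow> (\<exists>J. J \<in> Ind \<and> J \<subseteq> Wa A \<and> card J \<le> j0 A \<and> card (T \<inter> (Wa A \<inter> Xs J)) \<le> m0 A)"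
definition "Bad1 A = {S \<in> Pow N. card (S \<inter> Ib A) \<le> j0 A}"
definition "Bad2 A = {S \<in> Pow N. bad2 A S}"

lemma bad1_count:
  assumes A: "A \<subseteq> N"
  shows "real (card (Bad1 A)) \<le> 2 ^ card N * c0 ^ r A"
proof -
  let ?k = "r A" and ?n = "card N" and ?j = "j0 A"
  have IN: "Ib A \<subseteq> N" using Ib(2) A by blast
  have kn: "?k \<le> ?n" using Ib(3)[of A] card_mono[OF finN IN] by simp
  have "real (card (Bad1 A)) * (1/4) ^ ?j \<le> 2 ^ (?n - card (Ib A)) * (1 + 1/4) ^ card (Ib A)"
    unfolding Bad1_def by (rule count_bound[OF finN IN]) auto
  hence "real (card (Bad1 A)) \<le> 2 ^ (?n - ?k) * (5/4) ^ ?k * 4 ^ ?j"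
    by (simp add: Ib(3) field_simps power_divide)
  also have "2 ^ (?n - ?k) * (5/4::real) ^ ?k = 2 ^ ?n * (5/8) ^ ?k"
  proof -
    have "(2::real) ^ ?n = 2 ^ (?n - ?k) * 2 ^ ?k" using kn by (simp flip: power_add)
    moreover have "(8::real) ^ ?k = 2 ^ ?k * 4 ^ ?k" by (simp flip: power_mult_distrib)
    ultimately show ?thesis by (simp add: power_divide field_simps)
  qed
  finally have b: "real (card (Bad1 A)) \<le> 2 ^ ?n * ((5/8) ^ ?k * 4 ^ ?j)" by (simp add: mult.assoc)
  have "((5/8::real) ^ ?k * 4 ^ ?j) ^ 288 = (5/8) ^ (288 * ?k) * 4 ^ (288 * ?j)"
    by (simp add: power_mult_distrib power_mult mult.commute)
  also have "\<dots> \<le> (5/8) ^ (288 * ?k) * 4 ^ ?k"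
    by (intro mult_left_mono power_increasing) (auto simp: j0_def)
  also have "\<dots> = ((5/8) ^ 288 * 4) ^ ?k" by (simp add: power_mult_distrib power_mult)
  also have "\<dots> \<le> (1 / 2 ^ 20) ^ ?k" by (intro power_mono big_num) auto
  finally have "(5/8) ^ ?k * 4 ^ ?j \<le> c0 ^ ?k" by (intro le_c0) auto
  thus ?thesis using b by (smt (verit) mult_left_mono zero_le_power)
qed

lemma bad2_count:
  assumes A: "A \<subseteq> N" "0 < r A" and l1: "1 \<le> lamA A"
  shows "real (card (Bad2 A)) \<le> 2 ^ card N * c0 ^ r A"
proof -
  let ?k = "r A" and ?n = "card N" and ?j = "j0 A" and ?L = "Lw A" and ?W = "Wa A" and ?m = "m0 A"
  let ?y = "(?k * (143 * ?L + 144) + 287) div 288"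
  let ?JJ = "{J. J \<in> Ind \<and> J \<subseteq> ?W \<and> card J \<le> ?j}"
  let ?T = "\<lambda>J. {S \<in> Pow N. card (S \<inter> (?W \<inter> Xs J)) \<le> ?m}"
  have WA: "?W \<subseteq> A" unfolding Wa_def by (rule Pg_sub)
  have WN: "?W \<subseteq> N" using WA A by blast
  have finW: "finite ?W" using finite_subset[OF WN finN] .
  have Wc: "card ?W \<le> ?L * ?k" unfolding Wa_def using Pg_card[OF A(1)] .
  have sub: "Bad2 A \<subseteq> (\<Union>J\<in>?JJ. ?T J)" unfolding Bad2_def bad2_def by blast
  have finJJ: "finite ?JJ" by (rule finite_subset[of _ "Pow ?W"]) (use finW in auto)
  have each: "real (card (?T J)) \<le> 2 ^ ?n * ((5/8) ^ ?y * 4 ^ ?m)" if J: "J \<in> ?JJ" for J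
  proof -
    let ?Y = "?W \<inter> Xs J"
    have YN: "?Y \<subseteq> N" using WN by blast
    have Jind: "J \<in> Ind" and Jc: "card J \<le> ?j" using J by auto
    have "288 * card J \<le> ?k" using Jc unfolding j0_def by linarith
    hence "?k * (143 * ?L + 144) \<le> 288 * card ?Y"
      using W_bound[OF A l1 Jind] unfolding Wa_def Lw_def by simp
    hence yY: "?y \<le> card ?Y" by linarith
    have Yn: "card ?Y \<le> ?n" using card_mono[OF finN YN] .
    have "real (card (?T J)) * (1/4) ^ ?m \<le> 2 ^ (?n - card ?Y) * (1 + 1/4) ^ card ?Y"
      by (rule count_bound[OF finN YN]) auto
    hence "real (card (?T J)) \<le> 2 ^ (?n - card ?Y) * (5/4) ^ card ?Y * 4 ^ ?m"
      by (simp add: field_simps power_divide)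
    also have "2 ^ (?n - card ?Y) * (5/4::real) ^ card ?Y = 2 ^ ?n * (5/8) ^ card ?Y"
    proof -
      have "(2::real) ^ ?n = 2 ^ (?n - card ?Y) * 2 ^ card ?Y" using Yn by (simp flip: power_add)
      moreover have "(8::real) ^ card ?Y = 2 ^ card ?Y * 4 ^ card ?Y" by (simp flip: power_mult_distrib)
      ultimately show ?thesis by (simp add: power_divide field_simps)
    qed
    also have "(5/8::real) ^ card ?Y \<le> (5/8) ^ ?y" using yY by (intro power_decreasing) auto
    finally show ?thesis by (simp add: mult.assoc mult_left_mono)
  qed
  have "real (card (Bad2 A)) \<le> real (card (\<Union>J\<in>?JJ. ?T J))"
  proof -
    have "finite (\<Union>J\<in>?JJ. ?T J)" by (rule finite_subset[of _ "Pow N"]) (use finN in auto)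
    thus ?thesis using card_mono[OF _ sub] by simp
  qed
  also have "\<dots> \<le> real (\<Sum>J\<in>?JJ. card (?T J))" using card_UN_le[OF finJJ, of ?T] by (simp only: of_nat_le_iff)
  also have "\<dots> \<le> (\<Sum>J\<in>?JJ. 2 ^ ?n * ((5/8) ^ ?y * 4 ^ ?m))"
    unfolding of_nat_sum by (intro sum_mono each)
  also have "\<dots> = real (card ?JJ) * (2 ^ ?n * ((5/8) ^ ?y * 4 ^ ?m))" by simp
  finally have b1: "real (card (Bad2 A)) \<le> real (card ?JJ) * (2 ^ ?n * ((5/8) ^ ?y * 4 ^ ?m))" .
  have "?JJ \<subseteq> {J \<in> Pow ?W. card (J \<inter> ?W) \<le> ?j}" by (auto simp: Int_absorb2)
  hence "card ?JJ \<le> card {J \<in> Pow ?W. card (J \<inter> ?W) \<le> ?j}" using finW by (intro card_mono) auto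
  moreover have "real (card {J \<in> Pow ?W. card (J \<inter> ?W) \<le> ?j}) * (1/16) ^ ?j \<le> 2 ^ (card ?W - card ?W) * (1 + 1/16) ^ card ?W"
    by (rule count_bound[OF finW order_refl]) auto
  ultimately have "real (card ?JJ) * (1/16) ^ ?j \<le> (17/16) ^ card ?W"
  proof -
    assume a: "card ?JJ \<le> card {J \<in> Pow ?W. card (J \<inter> ?W) \<le> ?j}"
      and b: "real (card {J \<in> Pow ?W. card (J \<inter> ?W) \<le> ?j}) * (1/16) ^ ?j \<le> 2 ^ (card ?W - card ?W) * (1 + 1/16) ^ card ?W"
    have "real (card ?JJ) * (1/16) ^ ?j \<le> real (card {J \<in> Pow ?W. card (J \<inter> ?W) \<le> ?j}) * (1/16) ^ ?j"
      using a by (intro mult_right_mono) auto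
    also have "\<dots> \<le> (17/16) ^ card ?W" using b by simp
    finally show ?thesis .
  qed
  moreover have "(1/16::real) ^ ?j = 1 / 16 ^ ?j" by (simp add: power_one_over)
  ultimately have b2: "real (card ?JJ) \<le> (17/16) ^ card ?W * 16 ^ ?j" by (simp add: pos_divide_le_eq)
  let ?Q = "(17/16::real) ^ card ?W * 16 ^ ?j * ((5/8) ^ ?y * 4 ^ ?m)"
  have b3: "real (card (Bad2 A)) \<le> 2 ^ ?n * ?Q"
  proof -
    have X0: "0 \<le> (2::real) ^ ?n * ((5/8) ^ ?y * 4 ^ ?m)" by simp
    have "real (card ?JJ) * (2 ^ ?n * ((5/8) ^ ?y * 4 ^ ?m)) \<le> (17/16) ^ card ?W * 16 ^ ?j * (2 ^ ?n * ((5/8) ^ ?y * 4 ^ ?m))"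
      by (rule mult_right_mono[OF b2 X0])
    moreover have "(17/16) ^ card ?W * 16 ^ ?j * (2 ^ ?n * ((5/8) ^ ?y * 4 ^ ?m)) = 2 ^ ?n * ?Q"
      by (simp only: ac_simps)
    ultimately show ?thesis using b1 by linarith
  qed
  have "?Q ^ 288 = (17/16) ^ (288 * card ?W) * 16 ^ (288 * ?j) * ((5/8) ^ (288 * ?y) * 4 ^ (288 * ?m))"
    by (rule E1)
  also have "\<dots> \<le> (17/16) ^ (288 * (?L * ?k)) * 16 ^ ?k * ((5/8) ^ (143 * (?L * ?k) + 144 * ?k) * 4 ^ (32 * (?L * ?k) + 32 * ?k))"
  proof -
    have e1: "(17/16::real) ^ (288 * card ?W) \<le> (17/16) ^ (288 * (?L * ?k))"
      using Wc by (intro power_increasing) auto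
    have e2: "(16::real) ^ (288 * ?j) \<le> 16 ^ ?k" unfolding j0_def by (intro power_increasing) auto
    have "?k * (143 * ?L + 144) = 143 * (?L * ?k) + 144 * ?k" by (simp add: algebra_simps)
    moreover have "\<And>a::nat. a \<le> 288 * ((a + 287) div 288)" by (rule ar1)
    ultimately have y: "143 * (?L * ?k) + 144 * ?k \<le> 288 * ?y" by metis
    have e3: "(5/8::real) ^ (288 * ?y) \<le> (5/8) ^ (143 * (?L * ?k) + 144 * ?k)"
      using y by (intro power_decreasing) auto
    have "(?L + 1) * ?k = ?L * ?k + ?k" by simp
    moreover have "\<And>a b::nat. 288 * ((a + b) div 9) \<le> 32 * a + 32 * b" by (rule ar2)
    ultimately have m: "288 * ?m \<le> 32 * (?L * ?k) + 32 * ?k" unfolding m0_def by metis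
    have e4: "(4::real) ^ (288 * ?m) \<le> 4 ^ (32 * (?L * ?k) + 32 * ?k)"
      using m by (intro power_increasing) auto
    show ?thesis using e1 e2 e3 e4 by (intro mult_mono) auto
  qed
  also have "\<dots> = ((17/16) ^ 288 * (5/8) ^ 143 * 4 ^ 32) ^ (?L * ?k) * (16 * (5/8) ^ 144 * 4 ^ 32) ^ ?k"
    by (rule E3)
  also have "\<dots> \<le> 1 * (1 / 2 ^ 20) ^ ?k"
    by (rule E4[OF _ n1 _ n2]) simp_all
  finally have "?Q \<le> c0 ^ ?k" by (intro le_c0) auto
  thus ?thesis using b3 by (smt (verit) mult_left_mono zero_le_power)
qed

end




lemma c0_lt: "c0 < 1" and c0_gap: "1 / 576 \<le> 1 - c0"
proof -
  have "1 + real 288 * (c0 - 1) \<le> (1 + (c0 - 1)) ^ 288"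
    by (rule Bernoulli_inequality) (use c0_nonneg in simp)
  hence "1 + 288 * (c0 - 1) \<le> 1 / 2 ^ 20" using c0_pow by simp
  thus "1 / 576 \<le> 1 - c0" by simp
  thus "c0 < 1" by simp
qed

lemma geo: "(\<Sum>k\<in>{288..M}. c0 ^ k) \<le> 576 / 2 ^ 20"
proof (cases "M < 288")
  case True thus ?thesis by simp
next
  case False
  have "(\<Sum>k\<in>{288..M}. c0 ^ k) = (c0 ^ 288 - c0 ^ Suc M) / (1 - c0)"
    using False c0_lt by (simp add: sum_gp)
  also have "\<dots> \<le> c0 ^ 288 / (1 - c0)"
    using c0_lt c0_nonneg by (intro divide_right_mono) auto
  also have "\<dots> \<le> c0 ^ 288 / (1 / 576)"
    using c0_gap c0_nonneg by (intro divide_left_mono) auto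
  also have "\<dots> = 576 / 2 ^ 20" using c0_pow by simp
  finally show ?thesis .
qed

context mat begin

definition "AA = {Dset Ind N l | l. 0 < l \<and> 288 \<le> r (Dset Ind N l)}"
definition "goodT T \<longleftrightarrow> (\<forall>A\<in>AA. j0 A < card (T \<inter> Ib A) \<and> (9 \<le> lamA A \<longrightarrow> \<not> bad2 A T))"

lemma det:
  assumes T: "T \<subseteq> N" and g: "goodT T" and l: "0 < l" and k: "288 \<le> r (Dset Ind N l)"
  shows "real (r (Dset Ind N l)) / 288 \<le> real (r (Dset Ind T (max 1 (l / 9))))"
proof -
  let ?A = "Dset Ind N l"
  let ?k = "r ?A"
  have AAA: "?A \<in> AA" unfolding AA_def using l k by blast
  have AN: "?A \<subseteq> N" using D_sub[OF order_refl] l by simp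
  have g1: "j0 ?A < card (T \<inter> Ib ?A)" and g2: "9 \<le> lamA ?A \<Longrightarrow> \<not> bad2 ?A T" using g AAA unfolding goodT_def by auto
  show ?thesis
  proof (cases "l < 9")
    case True
    hence m: "max 1 (l / 9) = 1" by simp
    have DT: "Dset Ind T 1 = T" using D_small[OF T] by simp
    have "T \<inter> Ib ?A \<in> Ind" by (rule ind_down[OF Ib(1)]) auto
    hence "card (T \<inter> Ib ?A) = r (T \<inter> Ib ?A)" using rank_indep by simp
    also have "\<dots> \<le> r T" by (rule rank_mono) auto
    finally have "?k div 288 < r T" using g1 unfolding j0_def by simp
    hence "?k < 288 * r T" by linarith
    hence "real ?k / 288 \<le> real (r T)" by simp
    thus ?thesis using m DT by simp
  next
    case False
    let ?mu = "l / 9"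
    have m: "max 1 (l / 9) = ?mu" using False by simp
    have mu0: "0 \<le> ?mu" using l by simp
    have lam: "l \<le> lamA ?A" using lam_ge l k by simp
    hence "9 \<le> lamA ?A" using False by simp
    hence nb: "\<not> bad2 ?A T" using g2 by simp
    let ?W = "Wa ?A"
    let ?Z = "T \<inter> ?W"
    let ?B = "Dset Ind ?Z ?mu"
    have WA: "?W \<subseteq> ?A" unfolding Wa_def by (rule Pg_sub)
    have ZN: "?Z \<subseteq> N" using T by blast
    have finZ: "finite ?Z" using finite_subset[OF ZN finN] .
    have BZ: "?B \<subseteq> ?Z" using D_sub[OF ZN mu0] .
    have BT: "r ?B \<le> r (Dset Ind T ?mu)" using D_mono_set[OF _ T mu0, of ?Z] rank_mono by auto
    show ?thesis
    proof (rule ccontr)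
      assume "\<not> ?thesis"
      hence small: "real (r ?B) < real ?k / 288" using BT m by linarith
      obtain J where J: "J \<in> Ind" "J \<subseteq> ?B" "card J = r ?B" using rank_obtain by blast
      have rJ: "r J = card J" using rank_indep J by simp
      have Jj: "card J \<le> j0 ?A" using small J(3) unfolding j0_def by simp
      have sub1: "?Z \<inter> Xs J \<subseteq> ?Z - ?B"
      proof
        fix e assume e: "e \<in> ?Z \<inter> Xs J"
        show "e \<in> ?Z - ?B"
        proof (rule ccontr)
          assume "e \<notin> ?Z - ?B"
          hence "e \<in> ?B" using e by blast
          hence "insert e J \<subseteq> ?B" using J by blast
          hence "r (insert e J) \<le> r J" using rank_mono J(3) rJ by metis
          thus False using e unfolding Xs_def by simp
        qed
      qed
      have "fv ?mu ?Z \<le> fv ?mu ?B" using D_opt[OF ZN mu0 order_refl] .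
      hence f: "real (card ?Z) - real (card ?B) \<le> ?mu * (real (r ?Z) - real (r ?B))"
        unfolding fv_def by (simp add: algebra_simps)
      have "r ?Z \<le> ?k" using rank_mono WA by (meson inf_le2 order_trans)
      hence "?mu * (real (r ?Z) - real (r ?B)) \<le> ?mu * real ?k"
        using mu0 by (intro mult_left_mono) auto
      also have "\<dots> \<le> lamA ?A * real ?k / 9" using lam by (simp add: divide_right_mono mult_right_mono)
      also have "\<dots> < (real (Lw ?A) + 1) * real ?k / 9"
      proof -
        have "lamA ?A < real (Lw ?A) + 1" unfolding Lw_def using \<open>9 \<le> lamA ?A\<close> by linarith
        thus ?thesis using k by (intro divide_strict_right_mono mult_strict_right_mono) auto
      qed
      finally have lt: "real (card ?Z) - real (card ?B) < (real (Lw ?A) + 1) * real ?k / 9" using f by linarith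
      have "card (?Z \<inter> Xs J) \<le> card (?Z - ?B)" using sub1 finZ by (intro card_mono) auto
      also have "card (?Z - ?B) = card ?Z - card ?B" using card_Diff_subset[OF finite_subset[OF BZ finZ] BZ] .
      finally have "real (card (?Z \<inter> Xs J)) \<le> real (card ?Z) - real (card ?B)"
        using card_mono[OF finZ BZ] by linarith
      hence "real (card (?Z \<inter> Xs J)) < (real (Lw ?A) + 1) * real ?k / 9" using lt by linarith
      hence "real (9 * card (?Z \<inter> Xs J)) < real ((Lw ?A + 1) * ?k)" by (simp add: algebra_simps)
      hence "9 * card (?Z \<inter> Xs J) < (Lw ?A + 1) * ?k" by (simp only: of_nat_less_iff)
      hence "card (T \<inter> (?W \<inter> Xs J)) \<le> m0 ?A" unfolding m0_def by (simp add: Int_assoc)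
      hence "bad2 ?A T" unfolding bad2_def using J BZ Jj by blast
      thus False using nb by simp
    qed
  qed
qed

lemma good_approx:
  assumes T: "T \<subseteq> N" and g: "goodT T"
  shows "is_approx 288 9 (rd N) (rd T)"
  unfolding is_approx_def
proof (intro conjI allI impI)
  fix s t :: real assume "0 < s" "s \<le> t" thus "rd T t \<le> rd T s" using rd_mono[OF T] by simp
next
  fix t :: real assume t: "0 < t"
  show "0 \<le> rd T t" using rd_nonneg[OF T] .
  show "rd T t \<le> rd N t" using rd_le[OF T t] .
  define t' where "t' = (if t \<le> 1 then 1 else t)"
  have t't: "t \<le> t'" "1 \<le> t'" "0 < t'" unfolding t'_def by auto
  have phi: "(if t \<le> 1 then rd N 288 / 9 else rd N (288 * t) / 9) = rd N (288 * t') / 9"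
    unfolding t'_def by simp
  have ds: "downshift 288 9 (rd N) t = (if 0 < rd N (288 * t') / 9 \<and> rd N (288 * t') / 9 < 1 then 1 else rd N (288 * t') / 9)"
    unfolding downshift_def Let_def phi by simp
  have mono: "rd T t' \<le> rd T t" using rd_mono[OF T t t't(1)] .
  show "downshift 288 9 (rd N) t \<le> rd T t"
  proof (cases "rd N (288 * t') \<le> 0")
    case True
    hence "downshift 288 9 (rd N) t \<le> 0" unfolding ds by auto
    thus ?thesis using rd_nonneg[OF T, of t] by linarith
  next
    case False
    have "1 \<le> rd T t' \<and> rd N (288 * t') / 9 \<le> rd T t'"
    proof (rule rd_N_bound)
      show "0 < 288 * t'" using t't by simp
      show "0 < rd N (288 * t')" using False by simp
      fix l assume l: "0 < l" and lt: "288 * t' \<le> real (r (Dset Ind N l))"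
      have "288 \<le> real (r (Dset Ind N l))" using lt t't by linarith
      hence k: "288 \<le> r (Dset Ind N l)" by simp
      have "real (r (Dset Ind N l)) / 288 \<le> real (r (Dset Ind T (max 1 (l / 9))))"
        by (rule det[OF T g l k])
      hence "t' \<le> real (r (Dset Ind T (max 1 (l / 9))))" using lt by linarith
      hence "max 1 (l / 9) \<le> rd T t'" using t't by (intro rd_ge[OF T]) auto
      thus "1 \<le> rd T t' \<and> l / 9 \<le> rd T t'" by simp
    qed
    hence "downshift 288 9 (rd N) t \<le> rd T t'" unfolding ds by auto
    thus ?thesis using mono by linarith
  qed
qed

lemma AA_fin: "finite AA"
proof (rule finite_subset[of _ "Pow N"])
  show "AA \<subseteq> Pow N"
  proof
    fix A assume "A \<in> AA"
    then obtain l where "A = Dset Ind N l" "0 < l" unfolding AA_def by auto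
    thus "A \<in> Pow N" using D_sub[OF order_refl, of l] by simp
  qed
qed (simp add: finN)

lemma AA_inj: "inj_on r AA"
proof (rule inj_onI)
  fix A B assume "A \<in> AA" "B \<in> AA" "r A = r B"
  then obtain l l' where A: "A = Dset Ind N l" "0 < l" and B: "B = Dset Ind N l'" "0 < l'"
    unfolding AA_def by auto
  show "A = B"
  proof (cases "l \<le> l'")
    case True thus ?thesis using D_rank_inj[OF order_refl _ True] A B \<open>r A = r B\<close> by simp
  next
    case False thus ?thesis using D_rank_inj[OF order_refl _, of l' l] A B \<open>r A = r B\<close> by simp
  qed
qed

lemma AA_props: "A \<in> AA \<Longrightarrow> A \<subseteq> N \<and> 288 \<le> r A \<and> r A \<le> card N"
proof -
  assume "A \<in> AA"
  then obtain l where A: "A = Dset Ind N l" "0 < l" "288 \<le> r A" unfolding AA_def by auto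
  have AN: "A \<subseteq> N" using A D_sub[OF order_refl, of l] by simp
  have "r A \<le> card A" using rank_le_card finite_subset[OF AN finN] by simp
  moreover have "card A \<le> card N" using card_mono[OF finN AN] .
  ultimately show ?thesis using AN A by simp
qed

definition "BadS = {S \<in> Pow N. \<not> goodT S}"

lemma BadS_count: "real (card BadS) \<le> 2 ^ card N * (1152 / 2 ^ 20)"
proof -
  let ?B2 = "\<lambda>A. if 9 \<le> lamA A then Bad2 A else {}"
  have sub: "BadS \<subseteq> (\<Union>A\<in>AA. Bad1 A \<union> ?B2 A)"
  proof
    fix S assume "S \<in> BadS"
    then obtain A where S: "S \<subseteq> N" "A \<in> AA" "\<not> (j0 A < card (S \<inter> Ib A) \<and> (9 \<le> lamA A \<longrightarrow> \<not> bad2 A S))"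
      unfolding BadS_def goodT_def by auto
    hence "S \<in> Bad1 A \<union> ?B2 A" unfolding Bad1_def Bad2_def by auto
    thus "S \<in> (\<Union>A\<in>AA. Bad1 A \<union> ?B2 A)" using S(2) by blast
  qed
  have finU: "finite (\<Union>A\<in>AA. Bad1 A \<union> ?B2 A)"
    by (rule finite_subset[of _ "Pow N"]) (auto simp: Bad1_def Bad2_def finN split: if_splits)
  have each: "real (card (Bad1 A \<union> ?B2 A)) \<le> 2 * (2 ^ card N * c0 ^ r A)" if A: "A \<in> AA" for A
  proof -
    have p: "A \<subseteq> N" "0 < r A" using AA_props[OF A] by auto
    have "card (Bad1 A \<union> ?B2 A) \<le> card (Bad1 A) + card (?B2 A)" by (rule card_Un_le)
    moreover have "real (card (Bad1 A)) \<le> 2 ^ card N * c0 ^ r A" using bad1_count p by simp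
    moreover have "real (card (?B2 A)) \<le> 2 ^ card N * c0 ^ r A"
      using bad2_count[OF p] c0_nonneg by auto
    ultimately show ?thesis by linarith
  qed
  have "real (card BadS) \<le> real (card (\<Union>A\<in>AA. Bad1 A \<union> ?B2 A))"
    using card_mono[OF finU sub] by simp
  also have "\<dots> \<le> real (\<Sum>A\<in>AA. card (Bad1 A \<union> ?B2 A))"
    using card_UN_le[OF AA_fin, of "\<lambda>A. Bad1 A \<union> ?B2 A"] by (simp only: of_nat_le_iff)
  also have "\<dots> \<le> (\<Sum>A\<in>AA. 2 * (2 ^ card N * c0 ^ r A))"
    unfolding of_nat_sum by (intro sum_mono each)
  also have "\<dots> = 2 * 2 ^ card N * (\<Sum>A\<in>AA. c0 ^ r A)"
    by (simp add: sum_distrib_left mult.assoc)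
  also have "(\<Sum>A\<in>AA. c0 ^ r A) = (\<Sum>k\<in>r ` AA. c0 ^ k)"
    using sum.reindex[OF AA_inj, of "\<lambda>k. c0 ^ k"] by simp
  also have "\<dots> \<le> (\<Sum>k\<in>{288..card N}. c0 ^ k)"
    using AA_props c0_nonneg by (intro sum_mono2) auto
  also have "\<dots> \<le> 576 / 2 ^ 20" by (rule geo)
  finally show ?thesis by simp
qed

end




theorem theorem3p6:
  fixes N :: "'a set" and Ind :: "'a set set"
  assumes "matroid N Ind" and "loopless N Ind"
  shows "real (card {S. S \<subseteq> N \<and>
            is_approx 288 9 (rank_density N Ind) (rank_density S (restr_ind Ind S)) \<and>
            is_approx 288 9 (rank_density N Ind) (rank_density (N - S) (restr_ind Ind (N - S)))})
         / 2 ^ card N \<ge> 1 / 100"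
proof -
  interpret mat N Ind using assms by unfold_locales
  let ?G = "{S. S \<subseteq> N \<and>
            is_approx 288 9 (rank_density N Ind) (rank_density S (restr_ind Ind S)) \<and>
            is_approx 288 9 (rank_density N Ind) (rank_density (N - S) (restr_ind Ind (N - S)))}"
  let ?X = "BadS \<union> (\<lambda>S. N - S) ` BadS"
  have BP: "BadS \<subseteq> Pow N" unfolding BadS_def by auto
  have XP: "?X \<subseteq> Pow N" using BP by auto
  have finP: "finite (Pow N)" using finN by simp
  have sub: "Pow N - ?X \<subseteq> ?G"
  proof
    fix S assume S: "S \<in> Pow N - ?X"
    hence SN: "S \<subseteq> N" by auto
    have gS: "goodT S" using S unfolding BadS_def by auto
    have "N - S \<notin> BadS"
    proof
      assume "N - S \<in> BadS"
      hence "N - (N - S) \<in> (\<lambda>S. N - S) ` BadS" by blast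
      moreover have "N - (N - S) = S" using SN by blast
      ultimately show False using S by auto
    qed
    hence gS': "goodT (N - S)" unfolding BadS_def by auto
    have "is_approx 288 9 (rd N) (rd S)" by (rule good_approx[OF SN gS])
    moreover have "is_approx 288 9 (rd N) (rd (N - S))" by (rule good_approx[OF _ gS']) auto
    ultimately show "S \<in> ?G" using SN rd_N rd_restr[OF SN] rd_restr[of "N - S"] by auto
  qed
  have finG: "finite ?G" by (rule finite_subset[of _ "Pow N"]) (use finP in auto)
  have "card (Pow N - ?X) \<le> card ?G" using card_mono[OF finG sub] .
  moreover have "card (Pow N - ?X) = card (Pow N) - card ?X"
    using card_Diff_subset[OF finite_subset[OF XP finP] XP] .
  moreover have "card ?X \<le> card (Pow N)" using card_mono[OF finP XP] .
  moreover have "card ?X \<le> 2 * card BadS"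
  proof -
    have "card ?X \<le> card BadS + card ((\<lambda>S. N - S) ` BadS)" by (rule card_Un_le)
    moreover have "card ((\<lambda>S. N - S) ` BadS) \<le> card BadS" by (rule card_image_le) (use finite_subset[OF BP finP] in simp)
    ultimately show ?thesis by simp
  qed
  ultimately have "real (card (Pow N)) - 2 * real (card BadS) \<le> real (card ?G)" by linarith
  hence "2 ^ card N - 2 * (2 ^ card N * (1152 / 2 ^ 20)) \<le> real (card ?G)"
    using BadS_count card_Pow[OF finN] by simp
  hence "2 ^ card N * (1 / 100) \<le> real (card ?G)" by simp
  thus ?thesis by (simp add: pos_le_divide_eq mult.commute)
qed



end
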